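(* Let $(\mathfrak g,[\cdot,\cdot]_{\mathfrak g})$ be a finite-dimensional Lie algebra and suppose its dual space $\mathfrak g^*$ carries a Lie bracket $[\cdot,\cdot]_{\mathfrak g^*}$. Let $E:\mathfrak g\to\mathfrak g$ be linear with dual map $E^*:\mathfrak g^*\to\mathfrak g^*$, and assume that $(\mathfrak g,[\cdot,\cdot]_{\mathfrak g},E)$ and $(\mathfrak g^*,[\cdot,\cdot]_{\mathfrak g^*},E^* )$ are ENL algebras. Then the following are equivalent: (i) $((\mathfrak g,E),(\mathfrak g^*,E^* );\mathrm{ad}^*,\mathfrak{ad}^* )$ is a matched pair of ENL algebras, where $\mathrm{ad}^*$ is the coadjoint action of $\mathfrak g$ on $\mathfrak g^*$ and $\mathfrak{ad}^*$ is the coadjoint action of $\mathfrak g^*$ on $\mathfrak g$; (ii) $((\mathfrak g\oplus\mathfrak g^*,\widehat E,S),(\mathfrak g,E),(\mathfrak g^*,E^* ))$ is a Manin triple of ENL algebras (for a Lie bracket on $\mathfrak g\oplus\mathfrak g^*$), where $\widehat E(x+\xi)=Ex+E^*\xi$ and $S(x+\xi,y+\eta)=\xi(y)+\eta(x)$ for $x,y\in\mathfrak g$, $\xi,\eta\in\mathfrak g^*$.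
   Context: All vector spaces are finite-dimensional over an algebraically closed field of characteristic zero. An ENL algebra $(\mathfrak g,[\cdot,\cdot],E)$ is a Lie algebra with a linear map $E$ satisfying $E[x,y]=[x,Ey]$ for all $x,y$ (equivalently $E\circ\mathrm{ad}_x=\mathrm{ad}_x\circ E$, equivalently $E[x,y]=[Ex,y]$). Coadjoint actions: $\langle\mathrm{ad}^*_x\xi,y\rangle=-\langle\xi,[x,y]_{\mathfrak g}\rangle$ and $\langle\mathfrak{ad}^*_\xi x,\eta\rangle=-\langle x,[\xi,\eta]_{\mathfrak g^*}\rangle$. A matched pair of Lie algebras $(\mathfrak g,\mathfrak h;\rho,\mu)$ consists of Lie algebras $\mathfrak g,\mathfrak h$ and representations $\rho:\mathfrak g\to\mathfrak{gl}(\mathfrak h)$, $\mu:\mathfrak h\to\mathfrak{gl}(\mathfrak g)$ with $\rho(x)[\xi,\eta]_{\mathfrak h}=[\rho(x)\xi,\eta]_{\mathfrak h}+[\xi,\rho(x)\eta]_{\mathfrak h}+\rho(\mu(\eta)x)\xi-\rho(\mu(\xi)x)\eta$ and $\mu(\xi)[x,y]_{\mathfrak g}=[\mu(\xi)x,y]_{\mathfrak g}+[x,\mu(\xi)y]_{\mathfrak g}+\mu(\rho(y)\xi)x-\mu(\rho(x)\xi)y$ for all $x,y\in\mathfrak g,\ \xi,\eta\in\mathfrak h$. For ENL algebras $(\mathfrak g,E)$, $(\mathfrak h,F)$, a matched pair of ENL algebras $((\mathfrak g,E),(\mathfrak h,F);\rho,\mu)$ is a matched pair of Lie algebras $(\mathfrak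 g,\mathfrak h;\rho,\mu)$ with $F(\rho(x)\xi)=\rho(Ex)\xi=\rho(x)(F\xi)$ and $E(\mu(\xi)x)=\mu(F\xi)x=\mu(\xi)(Ex)$ for all $x\in\mathfrak g,\xi\in\mathfrak h$. A quadratic ENL algebra $(\mathcal G,\mathcal E,S)$ is an ENL algebra $(\mathcal G,\mathcal E)$ with a nondegenerate symmetric bilinear form $S$ that is invariant ($S([x,y],z)+S(y,[x,z])=0$) and satisfies $S(\mathcal Ex,y)=S(x,\mathcal Ey)$. A Manin triple of ENL algebras $((\mathcal G,\mathcal E,S),(\mathfrak g,E),(\mathfrak h,F))$ consists of a quadratic ENL algebra $(\mathcal G,\mathcal E,S)$ and ENL algebras $(\mathfrak g,E),(\mathfrak h,F)$ such that $\mathfrak g,\mathfrak h$ are Lie subalgebras of $\mathcal G$ with $\mathcal E|_{\mathfrak g}=E$, $\mathcal E|_{\mathfrak h}=F$, $\mathcal G=\mathfrak g\oplus\mathfrak h$ as vector spaces, and $S(\mathfrak g,\mathfrak g)=0=S(\mathfrak h,\mathfrak h)$. *)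

theory Defs
  imports "HOL-Computational_Algebra.Polynomial" "HOL-Library.Function_Algebras" "HOL-Library.Product_Plus"
begin

text \<open>A finite-dimensional vector space with a chosen
basis indexed by a finite type 'n is modelled as 'n => 'k (coordinate vectors), and its
dual is modelled as 'n => 'k via the pairing below. Abstract vector spaces are carriers
of type 'v (ab_group_add) with an explicit scalar multiplication sc.\<close>

definition alg_closed :: "'k::field itself \<Rightarrow> bool" where
  "alg_closed _ \<longleftrightarrow> (\<forall>p :: 'k poly. degree p \<ge> 1 \<longrightarrow> (\<exists>x. poly p x = 0))"

definition fsc :: "'k::field \<Rightarrow> ('n \<Rightarrow> 'k) \<Rightarrow> ('n \<Rightarrow> 'k)" where
  "fsc c x = (\<lambda>i. c * x i)"

definition psc :: "'k::field \<Rightarrow> ('n \<Rightarrow> 'k) \<times> ('n \<Rightarrow> 'k) \<Rightarrow> ('n \<Rightarrow> 'k) \<times> ('n \<Rightarrow> 'k)" where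
  "psc c p = (fsc c (fst p), fsc c (snd p))"

definition pairing :: "('n::finite \<Rightarrow> 'k::field) \<Rightarrow> ('n \<Rightarrow> 'k) \<Rightarrow> 'k" where
  "pairing xi x = (\<Sum>i\<in>UNIV. xi i * x i)"

definition basisv :: "'n \<Rightarrow> ('n \<Rightarrow> 'k::field)" where
  "basisv i = (\<lambda>j. if j = i then 1 else 0)"

text \<open>dual map: pairing (dual_map E xi) x = pairing xi (E x)\<close>
definition dual_map :: "(('n::finite \<Rightarrow> 'k::field) \<Rightarrow> ('n \<Rightarrow> 'k)) \<Rightarrow> ('n \<Rightarrow> 'k) \<Rightarrow> ('n \<Rightarrow> 'k)" where
  "dual_map E xi = (\<lambda>i. pairing xi (E (basisv i)))"

text \<open>coadjoint action: pairing (coad br a b) c = - pairing b (br a c)\<close>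
definition coad :: "(('n::finite \<Rightarrow> 'k::field) \<Rightarrow> ('n \<Rightarrow> 'k) \<Rightarrow> ('n \<Rightarrow> 'k))
    \<Rightarrow> ('n \<Rightarrow> 'k) \<Rightarrow> ('n \<Rightarrow> 'k) \<Rightarrow> ('n \<Rightarrow> 'k)" where
  "coad br a b = (\<lambda>i. - pairing b (br a (basisv i)))"

definition lin :: "('k \<Rightarrow> 'v::ab_group_add \<Rightarrow> 'v) \<Rightarrow> ('k \<Rightarrow> 'w::ab_group_add \<Rightarrow> 'w)
    \<Rightarrow> ('v \<Rightarrow> 'w) \<Rightarrow> bool" where
  "lin sc1 sc2 f \<longleftrightarrow> (\<forall>x y. f (x + y) = f x + f y) \<and> (\<forall>c x. f (sc1 c x) = sc2 c (f x))"

definition bilin :: "('k \<Rightarrow> 'v::ab_group_add \<Rightarrow> 'v) \<Rightarrow> ('k \<Rightarrow> 'w::ab_group_add \<Rightarrow> 'w)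
    \<Rightarrow> ('v \<Rightarrow> 'v \<Rightarrow> 'w) \<Rightarrow> bool" where
  "bilin sc1 sc2 b \<longleftrightarrow> (\<forall>x. lin sc1 sc2 (b x)) \<and> (\<forall>y. lin sc1 sc2 (\<lambda>x. b x y))"

definition lie_algebra :: "('k \<Rightarrow> 'v::ab_group_add \<Rightarrow> 'v) \<Rightarrow> ('v \<Rightarrow> 'v \<Rightarrow> 'v) \<Rightarrow> bool" where
  "lie_algebra sc br \<longleftrightarrow> bilin sc sc br \<and> (\<forall>x. br x x = 0) \<and>
     (\<forall>x y z. br x (br y z) + br y (br z x) + br z (br x y) = 0)"

definition enl_algebra :: "('k \<Rightarrow> 'v::ab_group_add \<Rightarrow> 'v) \<Rightarrow> ('v \<Rightarrow> 'v \<Rightarrow> 'v) \<Rightarrow> ('v \<Rightarrow> 'v) \<Rightarrow> bool" where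
  "enl_algebra sc br E \<longleftrightarrow> lie_algebra sc br \<and> lin sc sc E \<and> (\<forall>x y. E (br x y) = br x (E y))"

definition representation :: "('k \<Rightarrow> 'v::ab_group_add \<Rightarrow> 'v) \<Rightarrow> ('v \<Rightarrow> 'v \<Rightarrow> 'v)
    \<Rightarrow> ('k \<Rightarrow> 'w::ab_group_add \<Rightarrow> 'w) \<Rightarrow> ('v \<Rightarrow> 'w \<Rightarrow> 'w) \<Rightarrow> bool" where
  "representation scg brg sch rho \<longleftrightarrow> lin scg (\<lambda>c f. \<lambda>v. sch c (f v)) rho \<and> (\<forall>x. lin sch sch (rho x)) \<and>
     (\<forall>x y v. rho (brg x y) v = rho x (rho y v) - rho y (rho x v))"

definition matched_pair :: "('k \<Rightarrow> 'v::ab_group_add \<Rightarrow> 'v) \<Rightarrow> ('v \<Rightarrow> 'v \<Rightarrow> 'v)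
    \<Rightarrow> ('k \<Rightarrow> 'w::ab_group_add \<Rightarrow> 'w) \<Rightarrow> ('w \<Rightarrow> 'w \<Rightarrow> 'w)
    \<Rightarrow> ('v \<Rightarrow> 'w \<Rightarrow> 'w) \<Rightarrow> ('w \<Rightarrow> 'v \<Rightarrow> 'v) \<Rightarrow> bool" where
  "matched_pair scg brg sch brh rho mu \<longleftrightarrow>
     lie_algebra scg brg \<and> lie_algebra sch brh \<and>
     representation scg brg sch rho \<and> representation sch brh scg mu \<and>
     (\<forall>x xi eta. rho x (brh xi eta) = brh (rho x xi) eta + brh xi (rho x eta)
                   + rho (mu eta x) xi - rho (mu xi x) eta) \<and>
     (\<forall>xi x y. mu xi (brg x y) = brg (mu xi x) y + brg x (mu xi y)
                   + mu (rho y xi) x - mu (rho x xi) y)"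

definition matched_pair_enl :: "('k \<Rightarrow> 'v::ab_group_add \<Rightarrow> 'v) \<Rightarrow> ('v \<Rightarrow> 'v \<Rightarrow> 'v) \<Rightarrow> ('v \<Rightarrow> 'v)
    \<Rightarrow> ('k \<Rightarrow> 'w::ab_group_add \<Rightarrow> 'w) \<Rightarrow> ('w \<Rightarrow> 'w \<Rightarrow> 'w) \<Rightarrow> ('w \<Rightarrow> 'w)
    \<Rightarrow> ('v \<Rightarrow> 'w \<Rightarrow> 'w) \<Rightarrow> ('w \<Rightarrow> 'v \<Rightarrow> 'v) \<Rightarrow> bool" where
  "matched_pair_enl scg brg E sch brh F rho mu \<longleftrightarrow>
     enl_algebra scg brg E \<and> enl_algebra sch brh F \<and>
     matched_pair scg brg sch brh rho mu \<and>
     (\<forall>x xi. F (rho x xi) = rho (E x) xi \<and> rho (E x) xi = rho x (F xi)) \<and>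
     (\<forall>x xi. E (mu xi x) = mu (F xi) x \<and> mu (F xi) x = mu xi (E x))"

definition quadratic_enl :: "('k \<Rightarrow> 'u::ab_group_add \<Rightarrow> 'u) \<Rightarrow> ('u \<Rightarrow> 'u \<Rightarrow> 'u) \<Rightarrow> ('u \<Rightarrow> 'u)
    \<Rightarrow> ('u \<Rightarrow> 'u \<Rightarrow> 'k::field) \<Rightarrow> bool" where
  "quadratic_enl sc br E S \<longleftrightarrow> enl_algebra sc br E \<and> bilin sc (\<lambda>c a. c * a) S \<and>
     (\<forall>x y. S x y = S y x) \<and> (\<forall>x. (\<forall>y. S x y = 0) \<longrightarrow> x = 0) \<and>
     (\<forall>x y z. S (br x y) z + S y (br x z) = 0) \<and> (\<forall>x y. S (E x) y = S x (E y))"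

text \<open>Manin triple of ENL algebras; the subalgebras g, h of G are given as images of
injective linear embeddings i, j (g and h carry their own brackets and operators).\<close>
definition manin_triple_enl :: "('k \<Rightarrow> 'u::ab_group_add \<Rightarrow> 'u) \<Rightarrow> ('u \<Rightarrow> 'u \<Rightarrow> 'u) \<Rightarrow> ('u \<Rightarrow> 'u)
    \<Rightarrow> ('u \<Rightarrow> 'u \<Rightarrow> 'k::field)
    \<Rightarrow> ('k \<Rightarrow> 'v::ab_group_add \<Rightarrow> 'v) \<Rightarrow> ('v \<Rightarrow> 'v \<Rightarrow> 'v) \<Rightarrow> ('v \<Rightarrow> 'v)
    \<Rightarrow> ('k \<Rightarrow> 'w::ab_group_add \<Rightarrow> 'w) \<Rightarrow> ('w \<Rightarrow> 'w \<Rightarrow> 'w) \<Rightarrow> ('w \<Rightarrow> 'w)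
    \<Rightarrow> ('v \<Rightarrow> 'u) \<Rightarrow> ('w \<Rightarrow> 'u) \<Rightarrow> bool" where
  "manin_triple_enl scG brG EG S scg brg E sch brh F i j \<longleftrightarrow>
     quadratic_enl scG brG EG S \<and> enl_algebra scg brg E \<and> enl_algebra sch brh F \<and>
     lin scg scG i \<and> inj i \<and> lin sch scG j \<and> inj j \<and>
     (\<forall>x y. brG (i x) (i y) = i (brg x y)) \<and> (\<forall>xi eta. brG (j xi) (j eta) = j (brh xi eta)) \<and>
     (\<forall>x. EG (i x) = i (E x)) \<and> (\<forall>xi. EG (j xi) = j (F xi)) \<and>
     (\<forall>z. \<exists>!p. z = i (fst p) + j (snd p)) \<and>
     (\<forall>x y. S (i x) (i y) = 0) \<and> (\<forall>xi eta. S (j xi) (j eta) = 0)"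

definition Ehat :: "(('n::finite \<Rightarrow> 'k::field) \<Rightarrow> ('n \<Rightarrow> 'k))
    \<Rightarrow> ('n \<Rightarrow> 'k) \<times> ('n \<Rightarrow> 'k) \<Rightarrow> ('n \<Rightarrow> 'k) \<times> ('n \<Rightarrow> 'k)" where
  "Ehat E p = (E (fst p), dual_map E (snd p))"

definition Spair :: "('n::finite \<Rightarrow> 'k::field) \<times> ('n \<Rightarrow> 'k) \<Rightarrow> ('n \<Rightarrow> 'k) \<times> ('n \<Rightarrow> 'k) \<Rightarrow> 'k" where
  "Spair p q = pairing (snd p) (fst q) + pairing (snd q) (fst p)"

end

theory Submission
  imports Defs
begin

lemma fsc_apply: "fsc c x i = c * x i" by (simp add: fsc_def)

lemma sum_fun_apply': "finite A \<Longrightarrow> (\<Sum>a\<in>A. f a) j = (\<Sum>a\<in>A. f a j)"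
  by (induction A rule: finite_induct) auto

lemma vec_expand: "(x::'n::finite \<Rightarrow> 'k::field) = (\<Sum>i\<in>UNIV. fsc (x i) (basisv i))"
proof
  fix j
  have "(\<Sum>i\<in>UNIV. fsc (x i) (basisv i)) j = (\<Sum>i\<in>UNIV. x i * (if j = i then 1 else 0))"
    by (simp add: sum_fun_apply' fsc_def basisv_def)
  also have "\<dots> = (\<Sum>i\<in>UNIV. if j = i then x j else 0)"
    by (rule sum.cong) auto
  also have "\<dots> = x j" by simp
  finally show "x j = (\<Sum>i\<in>UNIV. fsc (x i) (basisv i)) j" by simp
qed

lemma lin_sum:
  assumes "lin fsc fsc (f :: ('n::finite \<Rightarrow> 'k::field) \<Rightarrow> ('m \<Rightarrow> 'k))" "finite A"
  shows "f (\<Sum>i\<in>A. fsc (g i) (v i)) = (\<Sum>i\<in>A. fsc (g i) (f (v i)))"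
  using assms(2)
proof (induction A rule: finite_induct)
  case empty
  have "f 0 = f 0 + f 0" using assms(1) unfolding lin_def by (metis add_0)
  then have "f 0 = 0" by simp
  then show ?case by (simp only: sum.empty)
next
  case (insert a A)
  have "f (\<Sum>i\<in>insert a A. fsc (g i) (v i)) = f (fsc (g a) (v a) + (\<Sum>i\<in>A. fsc (g i) (v i)))"
    by (simp only: sum.insert[OF insert.hyps])
  also have "\<dots> = f (fsc (g a) (v a)) + f (\<Sum>i\<in>A. fsc (g i) (v i))"
    using assms(1) unfolding lin_def by blast
  also have "\<dots> = fsc (g a) (f (v a)) + (\<Sum>i\<in>A. fsc (g i) (f (v i)))"
    using assms(1) insert.IH unfolding lin_def by (simp only:)
  also have "\<dots> = (\<Sum>i\<in>insert a A. fsc (g i) (f (v i)))"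
    by (simp only: sum.insert[OF insert.hyps])
  finally show ?case .
qed

lemma pairing_add1: "pairing (a + b) c = pairing a c + pairing b c"
  by (simp add: pairing_def sum.distrib algebra_simps)
lemma pairing_add2: "pairing a (b + c) = pairing a b + pairing a c"
  by (simp add: pairing_def sum.distrib algebra_simps)
lemma pairing_neg1: "pairing (- a) c = - pairing a c"
  by (simp add: pairing_def sum_negf)
lemma pairing_neg2: "pairing a (- c) = - pairing a c"
  by (simp add: pairing_def sum_negf)
lemma pairing_diff1: "pairing (a - b) c = pairing a c - pairing b c"
  by (simp add: pairing_def sum_subtractf algebra_simps)
lemma pairing_diff2: "pairing a (b - c) = pairing a b - pairing a c"
  by (simp add: pairing_def sum_subtractf algebra_simps)
lemma pairing_zero1: "pairing 0 c = 0" by (simp add: pairing_def)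
lemma pairing_zero2: "pairing a 0 = 0" by (simp add: pairing_def)
lemma pairing_fsc1: "pairing (fsc k a) c = k * pairing a c"
  by (simp add: pairing_def fsc_def sum_distrib_left algebra_simps)
lemma pairing_fsc2: "pairing a (fsc k c) = k * pairing a c"
  by (simp add: pairing_def fsc_def sum_distrib_left algebra_simps)
lemma pairing_comm: "pairing a c = pairing c a"
  by (simp add: pairing_def mult.commute)
lemma pairing_basisv: "pairing a (basisv i) = a i"
proof -
  have "pairing a (basisv i) = (\<Sum>j\<in>UNIV. if j = i then a i else 0)"
    unfolding pairing_def basisv_def by (rule sum.cong) auto
  then show ?thesis by simp
qed

lemmas pairing_simps = pairing_add1 pairing_add2 pairing_neg1 pairing_neg2 pairing_diff1 pairing_diff2
  pairing_zero1 pairing_zero2 pairing_fsc1 pairing_fsc2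

lemma pairing_ext: "(\<And>c. pairing a c = pairing b c) \<Longrightarrow> a = b"
  by (rule ext) (metis pairing_basisv)

lemma pairing_sum2: "finite A \<Longrightarrow> pairing a (\<Sum>i\<in>A. f i) = (\<Sum>i\<in>A. pairing a (f i))"
  unfolding pairing_def by (simp add: sum_fun_apply' sum_distrib_left) (rule sum.swap)

lemma dualize:
  assumes "lin fsc fsc f"
  shows "pairing (\<lambda>i. pairing b (f (basisv i))) c = pairing b (f c)"
proof -
  have "pairing b (f c) = pairing b (\<Sum>i\<in>UNIV. fsc (c i) (f (basisv i)))"
    by (subst vec_expand[of c]) (simp add: lin_sum[OF assms])
  also have "\<dots> = (\<Sum>i\<in>UNIV. c i * pairing b (f (basisv i)))"
    by (simp add: pairing_sum2 pairing_fsc2)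
  finally show ?thesis by (simp add: pairing_def mult.commute)
qed

lemma coad_pairing: "lin fsc fsc (br a) \<Longrightarrow> pairing (coad br a b) c = - pairing b (br a c)"
proof -
  assume l: "lin fsc fsc (br a)"
  have "coad br a b = - (\<lambda>i. pairing b (br a (basisv i)))" by (simp add: coad_def fun_eq_iff)
  then show ?thesis by (simp add: pairing_neg1 dualize[OF l])
qed

lemma dual_map_pairing: "lin fsc fsc E \<Longrightarrow> pairing (dual_map E b) c = pairing b (E c)"
  unfolding dual_map_def by (rule dualize)


lemma additive_facts:
  fixes f :: "'a::ab_group_add \<Rightarrow> 'b::ab_group_add"
  assumes "\<And>a b. f (a + b) = f a + f b"
  shows "f 0 = 0" "f (- x) = - f x" "f (x - y) = f x - f y"
proof -
  have "f (0 + 0) = f 0 + f 0" by (rule assms)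
  then have "f 0 = f 0 + f 0" by simp
  then show z: "f 0 = 0" by simp
  have n: "f (- u) = - f u" for u
  proof -
    have "f (- u + u) = f (- u) + f u" by (rule assms)
    then have "f (- u) + f u = 0" using z by simp
    then show ?thesis by (simp add: eq_neg_iff_add_eq_0)
  qed
  then show "f (- x) = - f x" .
  have "f (x + - y) = f x + f (- y)" by (rule assms)
  then show "f (x - y) = f x - f y" using n[of y] by simp
qed

lemma fsc_add: "fsc c (a + b) = fsc c a + fsc c b" by (simp add: fsc_def fun_eq_iff algebra_simps)
lemma fsc_diff: "fsc c (a - b) = fsc c a - fsc c b" by (simp add: fsc_def fun_eq_iff algebra_simps)
lemma fsc_neg: "fsc c (- b) = - fsc c b" by (simp add: fsc_def fun_eq_iff algebra_simps)
lemma fsc_zero: "fsc c 0 = 0" by (simp add: fsc_def fun_eq_iff)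

locale bil =
  fixes br :: "('n::finite \<Rightarrow> 'k::field) \<Rightarrow> ('n \<Rightarrow> 'k) \<Rightarrow> ('n \<Rightarrow> 'k)"
  assumes bl: "bilin fsc fsc br"
begin

lemma lin2: "lin fsc fsc (br a)" using bl unfolding bilin_def by blast
lemma lin1: "lin fsc fsc (\<lambda>a. br a b)" using bl unfolding bilin_def by blast

lemma add2: "br a (b + c) = br a b + br a c" using lin2 unfolding lin_def by blast
lemma add1: "br (a + b) c = br a c + br b c" using lin1 unfolding lin_def by blast
lemma fsc2: "br a (fsc k b) = fsc k (br a b)" using lin2 unfolding lin_def by blast
lemma fsc1: "br (fsc k a) b = fsc k (br a b)" using lin1 unfolding lin_def by blast
lemma zero2: "br a 0 = 0" and neg2: "br a (- b) = - br a b" and diff2: "br a (b - c) = br a b - br a c"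
  using additive_facts[of "br a", OF add2] by auto
lemma zero1: "br 0 b = 0" and neg1: "br (- a) b = - br a b" and diff1: "br (a - c) b = br a b - br c b"
  using additive_facts[of "\<lambda>a. br a b", OF add1] by auto

lemma cp: "pairing (coad br a b) c = - pairing b (br a c)"
  by (rule coad_pairing[OF lin2])

lemma cp2: "pairing c (coad br a b) = - pairing b (br a c)"
  using cp pairing_comm by metis

lemma cadd1: "coad br (a + a') b = coad br a b + coad br a' b"
  by (rule pairing_ext) (simp add: cp pairing_simps add1)
lemma cadd2: "coad br a (b + b') = coad br a b + coad br a b'"
  by (rule pairing_ext) (simp add: cp pairing_simps)
lemma cfsc1: "coad br (fsc k a) b = fsc k (coad br a b)"
  by (rule pairing_ext) (simp add: cp pairing_simps fsc1)
lemma cfsc2: "coad br a (fsc k b) = fsc k (coad br a b)"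
  by (rule pairing_ext) (simp add: cp pairing_simps)
lemma czero1: "coad br 0 b = 0" and cneg1: "coad br (- a) b = - coad br a b"
  and cdiff1: "coad br (a - c) b = coad br a b - coad br c b"
  using additive_facts[of "\<lambda>a. coad br a b", OF cadd1] by auto
lemma czero2: "coad br a 0 = 0" and cneg2: "coad br a (- b) = - coad br a b"
  and cdiff2: "coad br a (b - c) = coad br a b - coad br a c"
  using additive_facts[of "coad br a", OF cadd2] by auto

lemmas bsimps = add1 add2 zero1 zero2 neg1 neg2 diff1 diff2
  cadd1 cadd2 czero1 czero2 cneg1 cneg2 cdiff1 cdiff2

end

locale lie = bil +
  assumes alt: "br x x = 0"
    and jac: "br x (br y z) + br y (br z x) + br z (br x y) = 0"
begin

lemma antisym: "br x y = - br y x"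
proof -
  have "0 = br (x + y) (x + y)" by (simp add: alt)
  also have "\<dots> = br x x + br x y + (br y x + br y y)" by (simp add: add1 add2)
  finally have "br x y + br y x = 0" by (simp add: alt)
  then show ?thesis by (simp add: eq_neg_iff_add_eq_0)
qed

lemma crep: "coad br (br x y) v = coad br x (coad br y v) - coad br y (coad br x v)"
proof (rule pairing_ext)
  fix c
  have j: "br (br x y) c = br x (br y c) - br y (br x c)"
    using jac[of x y c] antisym[of c "br x y"] antisym[of c x] antisym[of "br x c" y]
    by (simp add: neg2 algebra_simps)
  show "pairing (coad br (br x y) v) c = pairing (coad br x (coad br y v) - coad br y (coad br x v)) c"
    by (simp add: cp pairing_simps j)
qed

end

lemma lie_of: "lie_algebra fsc br \<Longrightarrow> lie br"
  unfolding lie_algebra_def lie_def bil_def lie_axioms_def by blast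


definition Bstd :: "(('n::finite \<Rightarrow> 'k::field) \<Rightarrow> ('n \<Rightarrow> 'k) \<Rightarrow> ('n \<Rightarrow> 'k))
   \<Rightarrow> (('n \<Rightarrow> 'k) \<Rightarrow> ('n \<Rightarrow> 'k) \<Rightarrow> ('n \<Rightarrow> 'k))
   \<Rightarrow> ('n \<Rightarrow> 'k) \<times> ('n \<Rightarrow> 'k) \<Rightarrow> ('n \<Rightarrow> 'k) \<times> ('n \<Rightarrow> 'k) \<Rightarrow> ('n \<Rightarrow> 'k) \<times> ('n \<Rightarrow> 'k)" where
  "Bstd brg brd u v = (brg (fst u) (fst v) + coad brd (snd u) (fst v) - coad brd (snd v) (fst u),
      brd (snd u) (snd v) + coad brg (fst u) (snd v) - coad brg (fst v) (snd u))"

definition Jac :: "('a \<Rightarrow> 'a \<Rightarrow> 'a::plus) \<Rightarrow> 'a \<Rightarrow> 'a \<Rightarrow> 'a \<Rightarrow> 'a" where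
  "Jac B u v w = B u (B v w) + B v (B w u) + B w (B u v)"

locale two = g: lie brg + d: lie brd for brg brd :: "('n::finite \<Rightarrow> 'k::field) \<Rightarrow> ('n \<Rightarrow> 'k) \<Rightarrow> ('n \<Rightarrow> 'k)"
begin

lemma J_ggd1: "fst (Jac (Bstd brg brd) (x, 0) (y, 0) (0, z)) =
  coad brd z (brg x y) - (brg (coad brd z x) y + brg x (coad brd z y)
     + coad brd (coad brg y z) x - coad brd (coad brg x z) y)"
  unfolding Jac_def Bstd_def using g.antisym[of y "coad brd z x"]
  by (simp add: g.bsimps d.bsimps algebra_simps)

lemma J_ggd2: "snd (Jac (Bstd brg brd) (x, 0) (y, 0) (0, z)) =
  coad brg x (coad brg y z) - coad brg y (coad brg x z) - coad brg (brg x y) z"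
  unfolding Jac_def Bstd_def
  by (simp add: g.bsimps d.bsimps algebra_simps)

lemma J_gdd1: "fst (Jac (Bstd brg brd) (x, 0) (0, a) (0, b)) =
  coad brd a (coad brd b x) - coad brd b (coad brd a x) - coad brd (brd a b) x"
  unfolding Jac_def Bstd_def
  by (simp add: g.bsimps d.bsimps algebra_simps)

lemma J_gdd2: "snd (Jac (Bstd brg brd) (x, 0) (0, a) (0, b)) =
  coad brg x (brd a b) - (brd (coad brg x a) b + brd a (coad brg x b)
     + coad brg (coad brd b x) a - coad brg (coad brd a x) b)"
  unfolding Jac_def Bstd_def using d.antisym[of b "coad brg x a"]
  by (simp add: g.bsimps d.bsimps algebra_simps)

lemma J_ggg: "Jac (Bstd brg brd) (x, 0) (y, 0) (z, 0) = (brg x (brg y z) + brg y (brg z x) + brg z (brg x y), 0)"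
  unfolding Jac_def Bstd_def
  by (simp add: g.bsimps d.bsimps algebra_simps)

lemma J_ddd: "Jac (Bstd brg brd) (0, a) (0, b) (0, c) = (0, brd a (brd b c) + brd b (brd c a) + brd c (brd a b))"
  unfolding Jac_def Bstd_def
  by (simp add: g.bsimps d.bsimps algebra_simps)

end


lemma Jac_add1:
  fixes B :: "'a::ab_group_add \<Rightarrow> 'a \<Rightarrow> 'a"
  assumes "\<And>a b c. B (a + b) c = B a c + B b c" "\<And>a b c. B a (b + c) = B a b + B a c"
  shows "Jac B (u1 + u2) v w = Jac B u1 v w + Jac B u2 v w"
  unfolding Jac_def by (simp add: assms algebra_simps)

lemma Jac_cyc: "Jac B u v w = Jac B v w (u::'a::ab_semigroup_add)"
  unfolding Jac_def by (simp add: add_ac)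

lemma Jac_decomp:
  fixes B :: "('a::ab_group_add \<times> 'b::ab_group_add) \<Rightarrow> _ \<Rightarrow> _"
  assumes a1: "\<And>a b c. B (a + b) c = B a c + B b c" and a2: "\<And>a b c. B a (b + c) = B a b + B a c"
    and ggg: "\<And>x y z. Jac B (x, 0) (y, 0) (z, 0) = 0"
    and ddd: "\<And>x y z. Jac B (0, x) (0, y) (0, z) = 0"
    and ggd: "\<And>x y z. Jac B (x, 0) (y, 0) (0, z) = 0"
    and gdd: "\<And>x y z. Jac B (x, 0) (0, y) (0, z) = 0"
  shows "Jac B u v w = 0"
proof -
  have s: "p = (fst p, 0) + (0, snd p)" for p :: "'a \<times> 'b" by simp
  have ad: "Jac B (p + q) v w = Jac B p v w + Jac B q v w" for p q v w
    by (rule Jac_add1[OF a1 a2])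
  have ad2: "Jac B u (p + q) w = Jac B u p w + Jac B u q w" for p q u w
    using ad[of p q w u] Jac_cyc[of B u] Jac_cyc[of B w] by metis
  have ad3: "Jac B u v (p + q) = Jac B u v p + Jac B u v q" for p q u v
    using ad[of p q u v] Jac_cyc[of B u v] Jac_cyc[of B v] by metis
  have gdg: "Jac B (x, 0) (0, y) (z, 0) = 0" for x y z
    using Jac_cyc[of B "(x,0)" "(0,y)" "(z,0)"] Jac_cyc[of B "(0,y)" "(z,0)" "(x,0)"] ggd[of z x y] by metis
  have dgg: "Jac B (0, x) (y, 0) (z, 0) = 0" for x y z
    using Jac_cyc[of B "(0,x)" "(y,0)" "(z,0)"] ggd[of y z x] by metis
  have dgd: "Jac B (0, x) (y, 0) (0, z) = 0" for x y z
    using Jac_cyc[of B "(0,x)" "(y,0)" "(0,z)"] gdd[of y z x] by metis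
  have ddg: "Jac B (0, x) (0, y) (z, 0) = 0" for x y z
    using Jac_cyc[of B "(0,x)" "(0,y)" "(z,0)"] Jac_cyc[of B "(0,y)" "(z,0)" "(0,x)"] gdd[of z x y] by metis
  have "Jac B u v w = Jac B ((fst u, 0) + (0, snd u)) ((fst v, 0) + (0, snd v)) ((fst w, 0) + (0, snd w))"
    by simp
  also have "\<dots> = 0"
    unfolding ad ad2 ad3 by (simp add: ggg ddd ggd gdd gdg dgg dgd ddg)
  finally show ?thesis .
qed

context two
begin

lemma Bstd_add1: "Bstd brg brd (a + b) c = Bstd brg brd a c + Bstd brg brd b c"
  unfolding Bstd_def by (simp add: g.bsimps d.bsimps algebra_simps)
lemma Bstd_add2: "Bstd brg brd a (b + c) = Bstd brg brd a b + Bstd brg brd a c"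
  unfolding Bstd_def by (simp add: g.bsimps d.bsimps algebra_simps)
lemma Bstd_psc1: "Bstd brg brd (psc k a) c = psc k (Bstd brg brd a c)"
  unfolding Bstd_def psc_def by (simp add: g.fsc1 g.fsc2 d.fsc1 d.fsc2 g.cfsc1 g.cfsc2 d.cfsc1 d.cfsc2 fsc_add fsc_diff)
lemma Bstd_psc2: "Bstd brg brd a (psc k c) = psc k (Bstd brg brd a c)"
  unfolding Bstd_def psc_def by (simp add: g.fsc1 g.fsc2 d.fsc1 d.fsc2 g.cfsc1 g.cfsc2 d.cfsc1 d.cfsc2 fsc_add fsc_diff)
lemma Bstd_alt: "Bstd brg brd a a = 0"
  unfolding Bstd_def by (simp add: g.alt d.alt prod_eq_iff)

lemma Jstd_zero:
  assumes C1: "\<And>x a b. coad brg x (brd a b) = brd (coad brg x a) b + brd a (coad brg x b)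
                   + coad brg (coad brd b x) a - coad brg (coad brd a x) b"
    and C2: "\<And>a x y. coad brd a (brg x y) = brg (coad brd a x) y + brg x (coad brd a y)
                   + coad brd (coad brg y a) x - coad brd (coad brg x a) y"
  shows "Jac (Bstd brg brd) u v w = 0"
proof (rule Jac_decomp)
  show "Jac (Bstd brg brd) (x, 0) (y, 0) (z, 0) = 0" for x y z by (simp add: J_ggg g.jac prod_eq_iff)
  show "Jac (Bstd brg brd) (0, x) (0, y) (0, z) = 0" for x y z by (simp add: J_ddd d.jac prod_eq_iff)
  show "Jac (Bstd brg brd) (x, 0) (y, 0) (0, z) = 0" for x y z
    using J_ggd1[of x y z] J_ggd2[of x y z] C2[of z x y] g.crep[of x y z] by (simp add: prod_eq_iff)
  show "Jac (Bstd brg brd) (x, 0) (0, y) (0, z) = 0" for x y z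
    using J_gdd1[of x y z] J_gdd2[of x y z] C1[of x y z] d.crep[of y z x] by (simp add: prod_eq_iff)
qed (auto simp: Bstd_add1 Bstd_add2)

end


locale enl2 = two brg brd for brg brd :: "('n::finite \<Rightarrow> 'k::field) \<Rightarrow> ('n \<Rightarrow> 'k) \<Rightarrow> ('n \<Rightarrow> 'k)" +
  fixes E :: "('n \<Rightarrow> 'k) \<Rightarrow> ('n \<Rightarrow> 'k)"
  assumes linE: "lin fsc fsc E" and linF: "lin fsc fsc (dual_map E)"
    and eg: "E (brg x y) = brg x (E y)" and ed: "dual_map E (brd a b) = brd a (dual_map E b)"
begin

abbreviation "F \<equiv> dual_map E"

lemma dp: "pairing (F a) c = pairing a (E c)" by (rule dual_map_pairing[OF linE])

lemma Eneg: "E (- x) = - E x"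
proof -
  have "\<And>a b. E (a + b) = E a + E b" using linE unfolding lin_def by blast
  then show ?thesis by (rule additive_facts(2)[where f=E])
qed
lemma Fneg: "F (- x) = - F x"
proof -
  have "\<And>a b. F (a + b) = F a + F b" using linF unfolding lin_def by blast
  then show ?thesis by (rule additive_facts(2)[where f=F])
qed
lemma eg': "E (brg x y) = brg (E x) y"
proof -
  have "E (brg x y) = E (- brg y x)" using g.antisym[of x y] by simp
  also have "\<dots> = - brg y (E x)" by (simp add: Eneg eg)
  also have "\<dots> = brg (E x) y" using g.antisym[of "E x" y] by simp
  finally show ?thesis .
qed
lemma ed': "F (brd a b) = brd (F a) b"
proof -
  have "F (brd a b) = F (- brd b a)" using d.antisym[of a b] by simp
  also have "\<dots> = - brd b (F a)" by (simp add: Fneg ed)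
  also have "\<dots> = brd (F a) b" using d.antisym[of "F a" b] by simp
  finally show ?thesis .
qed

lemma Eadd: "E (a + b) = E a + E b" using linE unfolding lin_def by blast
lemma Fadd: "F (a + b) = F a + F b" using linF unfolding lin_def by blast
lemma Ediff: "E (a - b) = E a - E b" using Eadd by (rule additive_facts(3)[where f=E])
lemma Fdiff: "F (a - b) = F a - F b" using Fadd by (rule additive_facts(3)[where f=F])
lemma Ezero: "E 0 = 0" using Eadd by (rule additive_facts(1)[where f=E])
lemma Fzero: "F 0 = 0" using Fadd by (rule additive_facts(1)[where f=F])
lemma Efsc: "E (fsc c a) = fsc c (E a)" using linE unfolding lin_def by blast
lemma Ffsc: "F (fsc c a) = fsc c (F a)" using linF unfolding lin_def by blast

lemma egg: "brg x (E y) = brg (E x) y" using eg eg' by metis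
lemma edd: "brd a (F b) = brd (F a) b" using ed ed' by metis

lemma r1: "F (coad brg x a) = coad brg (E x) a"
  by (rule pairing_ext) (simp add: dp g.cp eg' egg)
lemma r2: "coad brg (E x) a = coad brg x (F a)"
  by (rule pairing_ext) (simp add: dp g.cp eg' egg)
lemma m1: "E (coad brd a x) = coad brd (F a) x"
proof (rule pairing_ext)
  fix c
  have "pairing (E (coad brd a x)) c = pairing (F c) (coad brd a x)"
    by (simp add: dp pairing_comm)
  also have "\<dots> = - pairing x (brd a (F c))" by (simp add: d.cp pairing_comm[of "F c"])
  also have "\<dots> = pairing (coad brd (F a) x) c" by (simp add: d.cp edd)
  finally show "pairing (E (coad brd a x)) c = pairing (coad brd (F a) x) c" .
qed
lemma m2: "coad brd (F a) x = coad brd a (E x)"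
proof (rule pairing_ext)
  fix c
  have "pairing (coad brd a (E x)) c = - pairing (E x) (brd a c)" by (simp add: d.cp)
  also have "\<dots> = - pairing (F (brd a c)) x" by (metis dp pairing_comm)
  also have "\<dots> = pairing (coad brd (F a) x) c"
    using d.cp[of "F a" x c] ed'[of a c] pairing_comm[of x "F (brd a c)"] by simp
  finally show "pairing (coad brd (F a) x) c = pairing (coad brd a (E x)) c" by simp
qed

end



theorem theorem2p9:
  fixes brg brd :: "('n::finite \<Rightarrow> 'k::field_char_0) \<Rightarrow> ('n \<Rightarrow> 'k) \<Rightarrow> ('n \<Rightarrow> 'k)"
    and E :: "('n \<Rightarrow> 'k) \<Rightarrow> ('n \<Rightarrow> 'k)"
  assumes "alg_closed TYPE('k)"
    and "enl_algebra fsc brg E"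
    and "enl_algebra fsc brd (dual_map E)"
  shows "matched_pair_enl fsc brg E fsc brd (dual_map E) (coad brg) (coad brd)
     \<longleftrightarrow> (\<exists>B. manin_triple_enl psc B (Ehat E) Spair fsc brg E fsc brd (dual_map E)
              (\<lambda>x. (x, 0)) (\<lambda>xi. (0, xi)))"
proof -
  from assms(2) have lieg: "lie_algebra fsc brg" and linE: "lin fsc fsc E"
    and egE: "\<forall>x y. E (brg x y) = brg x (E y)" unfolding enl_algebra_def by auto
  from assms(3) have lied: "lie_algebra fsc brd" and linF: "lin fsc fsc (dual_map E)"
    and edF: "\<forall>x y. dual_map E (brd x y) = brd x (dual_map E y)" unfolding enl_algebra_def by auto
  have "enl2 brg brd E"
    unfolding enl2_def enl2_axioms_def two_def using lie_of[OF lieg] lie_of[OF lied] linE linF egE edF by blast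
  then interpret enl2 brg brd E .
  have repg: "representation fsc brg fsc (coad brg)"
    unfolding representation_def lin_def by (simp add: fun_eq_iff g.cadd1 g.cfsc1 g.cadd2 g.cfsc2 g.crep)
  have repd: "representation fsc brd fsc (coad brd)"
    unfolding representation_def lin_def by (simp add: fun_eq_iff d.cadd1 d.cfsc1 d.cadd2 d.cfsc2 d.crep)
  show ?thesis
  proof
    assume mp: "matched_pair_enl fsc brg E fsc brd F (coad brg) (coad brd)"
    then have C1: "\<And>x a b. coad brg x (brd a b) = brd (coad brg x a) b + brd a (coad brg x b)
                   + coad brg (coad brd b x) a - coad brg (coad brd a x) b"
      and C2: "\<And>a x y. coad brd a (brg x y) = brg (coad brd a x) y + brg x (coad brd a y)
                   + coad brd (coad brg y a) x - coad brd (coad brg x a) y"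
      unfolding matched_pair_enl_def matched_pair_def by auto
    have J: "\<And>u v w. Jac (Bstd brg brd) u v w = 0"
      by (rule Jstd_zero) (use C1 C2 in auto)
    have linB: "bilin psc psc (Bstd brg brd)"
      unfolding bilin_def lin_def using Bstd_add1 Bstd_add2 Bstd_psc1 Bstd_psc2 by auto
    have lieB: "lie_algebra psc (Bstd brg brd)"
      unfolding lie_algebra_def using linB Bstd_alt J unfolding Jac_def by auto
    have linEh: "lin psc psc (Ehat E)"
      unfolding lin_def Ehat_def psc_def by (simp add: Eadd Fadd Efsc Ffsc)
    have enlEh: "\<forall>x y. Ehat E (Bstd brg brd x y) = Bstd brg brd x (Ehat E y)"
      unfolding Ehat_def Bstd_def by (simp add: Eadd Fadd Ediff Fdiff eg ed m1 m2 r1 r2)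
    have bilS: "bilin psc (\<lambda>c a. c * a) (Spair :: ('n \<Rightarrow> 'k) \<times> ('n \<Rightarrow> 'k) \<Rightarrow> _)"
      unfolding bilin_def lin_def Spair_def psc_def by (simp add: pairing_simps algebra_simps)
    have symS: "\<forall>x y :: ('n \<Rightarrow> 'k) \<times> ('n \<Rightarrow> 'k). Spair x y = Spair y x" unfolding Spair_def by (simp add: add.commute)
    have ndS: "\<forall>x :: ('n \<Rightarrow> 'k) \<times> ('n \<Rightarrow> 'k). (\<forall>y. Spair x y = 0) \<longrightarrow> x = 0"
    proof (intro allI impI)
      fix p :: "('n \<Rightarrow> 'k) \<times> ('n \<Rightarrow> 'k)"
      assume h: "\<forall>y. Spair p y = 0"
      have 1: "pairing (snd p) c = pairing 0 c" for c
        using h[rule_format, of "(c, 0)"] unfolding Spair_def by (simp add: pairing_simps)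
      have 2: "pairing (fst p) c = pairing 0 c" for c
        using h[rule_format, of "(0, c)"] unfolding Spair_def by (simp add: pairing_simps pairing_comm[of c])
      show "p = 0" using pairing_ext[OF 1] pairing_ext[OF 2] by (simp add: prod_eq_iff)
    qed
    have invS: "\<forall>x y z. Spair (Bstd brg brd x y) z + Spair y (Bstd brg brd x z) = 0"
    proof (intro allI)
      fix x y z :: "('n \<Rightarrow> 'k) \<times> ('n \<Rightarrow> 'k)"
      show "Spair (Bstd brg brd x y) z + Spair y (Bstd brg brd x z) = 0"
        unfolding Spair_def Bstd_def
        using g.antisym[of "fst z" "fst y"] d.antisym[of "snd z" "snd y"]
          pairing_comm[of "brd (snd x) (snd y)" "fst z"] pairing_comm[of "brd (snd x) (snd z)" "fst y"]
        by (simp add: pairing_simps g.cp d.cp2 algebra_simps)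
    qed
    have adjS: "\<forall>x y. Spair (Ehat E x) y = Spair x (Ehat E y)"
      unfolding Spair_def Ehat_def by (simp add: dp add.commute)
    have "manin_triple_enl psc (Bstd brg brd) (Ehat E) Spair fsc brg E fsc brd F (\<lambda>x. (x, 0)) (\<lambda>xi. (0, xi))"
      unfolding manin_triple_enl_def quadratic_enl_def
    proof (intro conjI)
      show "enl_algebra psc (Bstd brg brd) (Ehat E)"
        unfolding enl_algebra_def using lieB linEh enlEh by blast
      show "lin fsc psc (\<lambda>x. (x, 0))" unfolding lin_def psc_def by (simp add: fsc_zero)
      show "lin fsc psc (\<lambda>x. (0, x))" unfolding lin_def psc_def by (simp add: fsc_zero)
      show "inj (\<lambda>x. (x, 0))" by (simp add: inj_on_def)
      show "inj (\<lambda>x. (0, x))" by (simp add: inj_on_def)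
      show "\<forall>x y. Bstd brg brd (x, 0) (y, 0) = (brg x y, 0)"
        unfolding Bstd_def by (simp add: g.bsimps d.bsimps)
      show "\<forall>x y. Bstd brg brd (0, x) (0, y) = (0, brd x y)"
        unfolding Bstd_def by (simp add: g.bsimps d.bsimps)
      show "\<forall>x. Ehat E (x, 0) = (E x, 0)" unfolding Ehat_def by (simp add: Fzero)
      show "\<forall>x. Ehat E (0, x) = (0, F x)" unfolding Ehat_def by (simp add: Ezero)
      show "\<forall>z :: ('n \<Rightarrow> 'k) \<times> ('n \<Rightarrow> 'k). \<exists>!p. z = (fst p, 0) + (0, snd p)"
        apply (intro allI)
        subgoal for z by (rule ex1I[of _ z]) (auto simp: prod_eq_iff)
        done
      show "\<forall>x y. Spair (x, 0) (y, 0) = 0" unfolding Spair_def by (simp add: pairing_simps)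
      show "\<forall>x y. Spair (0, x) (0, y) = 0" unfolding Spair_def by (simp add: pairing_simps)
    qed (use assms bilS symS ndS invS adjS in auto)
    then show "\<exists>B. manin_triple_enl psc B (Ehat E) Spair fsc brg E fsc brd F (\<lambda>x. (x, 0)) (\<lambda>xi. (0, xi))"
      by blast
  next
    assume "\<exists>B. manin_triple_enl psc B (Ehat E) Spair fsc brg E fsc brd F (\<lambda>x. (x, 0)) (\<lambda>xi. (0, xi))"
    then obtain B where M: "manin_triple_enl psc B (Ehat E) Spair fsc brg E fsc brd F (\<lambda>x. (x, 0)) (\<lambda>xi. (0, xi))"
      by blast
    from M have lieB: "lie_algebra psc B"
      and invS: "\<And>x y z. Spair (B x y) z + Spair y (B x z) = 0"
      and BGG: "\<And>x y. B (x, 0) (y, 0) = (brg x y, 0)"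
      and BDD: "\<And>x y. B (0, x) (0, y) = (0, brd x y)"
      unfolding manin_triple_enl_def quadratic_enl_def enl_algebra_def by auto
    from lieB have Badd1: "\<And>a b c. B (a + b) c = B a c + B b c"
      and Badd2: "\<And>a b c. B a (b + c) = B a b + B a c"
      and Balt: "\<And>a. B a a = 0"
      and Bjac: "\<And>x y z. B x (B y z) + B y (B z x) + B z (B x y) = 0"
      unfolding lie_algebra_def bilin_def lin_def by auto
    have Banti: "B a b = - B b a" for a b
    proof -
      have "0 = B (a + b) (a + b)" by (simp add: Balt)
      also have "\<dots> = B a a + B a b + (B b a + B b b)" by (simp add: Badd1 Badd2)
      finally have "B a b + B b a = 0" by (simp add: Balt)
      then show ?thesis by (simp add: eq_neg_iff_add_eq_0)
    qed
    have BGD: "B (x, 0) (0, b) = (- coad brd b x, coad brg x b)" for x b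
    proof -
      define p where "p = B (x, 0) (0, b)"
      have s: "snd p = coad brg x b"
      proof (rule pairing_ext)
        fix c
        have "Spair p (c, 0) + Spair (0, b) (B (x, 0) (c, 0)) = 0" unfolding p_def by (rule invS)
        then show "pairing (snd p) c = pairing (coad brg x b) c"
          unfolding Spair_def BGG by (simp add: pairing_simps g.cp eq_neg_iff_add_eq_0)
      qed
      have f: "fst (B (0, b) (x, 0)) = coad brd b x"
      proof (rule pairing_ext)
        fix c
        have "Spair (B (0, b) (x, 0)) (0, c) + Spair (x, 0) (B (0, b) (0, c)) = 0" by (rule invS)
        then have "pairing c (fst (B (0, b) (x, 0))) = - pairing (brd b c) x"
          unfolding Spair_def BDD by (simp add: pairing_simps eq_neg_iff_add_eq_0)
        then show "pairing (fst (B (0, b) (x, 0))) c = pairing (coad brd b x) c"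
          using pairing_comm[of c "fst (B (0, b) (x, 0))"] d.cp[of b x c] pairing_comm[of x "brd b c"] by simp
      qed
      have "fst (B (0, b) (x, 0)) = - fst p" unfolding p_def using Banti[of "(0, b)" "(x, 0)"] by simp
      then have "fst p = - coad brd b x" using f by (metis minus_minus)
      with s show ?thesis unfolding p_def by (simp add: prod_eq_iff)
    qed
    have Beq: "B u v = Bstd brg brd u v" for u v
    proof -
      have "B u v = B ((fst u, 0) + (0, snd u)) ((fst v, 0) + (0, snd v))" by simp
      also have "\<dots> = B (fst u, 0) (fst v, 0) + B (fst u, 0) (0, snd v) + (- B (fst v, 0) (0, snd u)) + B (0, snd u) (0, snd v)"
        unfolding Badd1 Badd2 using Banti[of "(0, snd u)" "(fst v, 0)"] by (simp add: algebra_simps)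
      also have "\<dots> = Bstd brg brd u v"
        unfolding BGG BDD BGD Bstd_def by (simp add: algebra_simps)
      finally show ?thesis .
    qed
    have J: "Jac (Bstd brg brd) u v w = 0" for u v w
      using Bjac[of u v w] unfolding Jac_def Beq .
    have C1: "coad brg x (brd a b) = brd (coad brg x a) b + brd a (coad brg x b)
                   + coad brg (coad brd b x) a - coad brg (coad brd a x) b" for x a b
      using J_gdd2[of x a b] J[of "(x, 0)" "(0, a)" "(0, b)"] by simp
    have C2: "coad brd a (brg x y) = brg (coad brd a x) y + brg x (coad brd a y)
                   + coad brd (coad brg y a) x - coad brd (coad brg x a) y" for a x y
      using J_ggd1[of x y a] J[of "(x, 0)" "(y, 0)" "(0, a)"] by simp
    show "matched_pair_enl fsc brg E fsc brd F (coad brg) (coad brd)"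
      unfolding matched_pair_enl_def matched_pair_def
      using assms(2,3) lieg lied repg repd C1 C2 r1 r2 m1 m2 by auto
  qed
qed

end
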